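(* Let $a>0$ and $\psi_a(x)=\operatorname{sech}(ax)=\frac{2}{e^{ax}+e^{-ax}}$. There is a constant $C>0$ (depending only on $a$) such that every $f=\sum_{k\in\mathbb{Z}}c_k\psi_a(\cdot-k)$ with $c\in\ell^\infty(\mathbb{Z})$ has an extension to a meromorphic function on $\mathbb{C}$ whose set of poles $P_f$ satisfies $P_f\subseteq P:=\mathbb{Z}+\frac{i\pi}{a}(\frac12+\mathbb{Z})$; every pole of $f$ is simple; and for all $x+iy\in\mathbb{C}\setminus P$, $$|f(x+iy)|\le C\|c\|_\infty|\psi_a(\langle x\rangle+iy)|\le C\|c\|_\infty\min\Big\{|a\langle x\rangle|^{-1},\ \big|2\langle\tfrac{ay}{\pi}-\tfrac12\rangle\big|^{-1}\Big\}.$$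
   Context: For real $x$, $\langle x\rangle:=x-l$ where $l\in\mathbb{Z}$ is chosen so that $\langle x\rangle\in[-1/2,1/2)$. Here $\psi_a(z)=\operatorname{sech}(az)$ for complex $z$ denotes the meromorphic extension. *)

theory Defs
  imports "HOL-Complex_Analysis.Complex_Analysis"
begin

definition psi :: "real \<Rightarrow> complex \<Rightarrow> complex" where
  "psi a z = 2 / (exp (complex_of_real a * z) + exp (- (complex_of_real a * z)))"

text \<open>Centered fractional part: x - l with l integer and result in [-1/2, 1/2).\<close>
definition cfrac :: "real \<Rightarrow> real" where
  "cfrac x = x - of_int \<lfloor>x + 1/2\<rfloor>"

definition poleset :: "real \<Rightarrow> complex set" where
  "poleset a = {of_int m + \<i> * complex_of_real (pi / a) * (1/2 + of_int n) | m n :: int. True}"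

definition supnorm :: "(int \<Rightarrow> complex) \<Rightarrow> real" where
  "supnorm c = (SUP k. norm (c k))"

end

theory Submission
  imports Defs
begin


definition DD :: "real \<Rightarrow> complex \<Rightarrow> complex" where
  "DD a w = exp (complex_of_real a * w) + exp (- (complex_of_real a * w))"

lemma psi_DD: "psi a w = 2 / DD a w"
  by (simp add: psi_def DD_def)

lemma Re_DD: "Re (DD a w) = (exp (a * Re w) + exp (-(a * Re w))) * cos (a * Im w)"
  by (simp add: DD_def Re_exp algebra_simps)

lemma Im_DD: "Im (DD a w) = (exp (a * Re w) - exp (-(a * Re w))) * sin (a * Im w)"
  by (simp add: DD_def Im_exp algebra_simps)

lemma norm_DD_sq: "(cmod (DD a w))^2 = 4 * ((sinh (a * Re w))^2 + (cos (a * Im w))^2)"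
proof -
  define u where "u = a * Re w"
  define v where "v = a * Im w"
  have e: "exp u * exp (-u) = 1" by (simp add: exp_minus field_simps)
  have "(cmod (DD a w))^2 = (Re (DD a w))^2 + (Im (DD a w))^2" by (simp add: cmod_power2)
  also have "\<dots> = (exp u + exp (-u))^2 * (cos v)^2 + (exp u - exp (-u))^2 * (sin v)^2"
    by (simp add: Re_DD Im_DD u_def v_def power_mult_distrib)
  also have "\<dots> = 4 * ((sinh u)^2 + (cos v)^2)"
  proof -
    have k: "(A + B)^2 * C + (A - B)^2 * (1 - C) = 4 * (((A - B) / 2)^2 + C)" if "A * B = 1" for A B C :: real
      using that by (simp add: power2_eq_square field_simps)
    have "(sin v)^2 = 1 - (cos v)^2" by (simp add: sin_squared_eq)
    then show ?thesis using k[OF e, of "(cos v)^2"] by (simp add: sinh_def)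
  qed
  finally show ?thesis by (simp add: u_def v_def)
qed

lemma norm_DD_ge_sinh: "cmod (DD a w) \<ge> 2 * \<bar>sinh (a * Re w)\<bar>"
proof -
  have "(2 * \<bar>sinh (a * Re w)\<bar>)^2 \<le> (cmod (DD a w))^2"
    using norm_DD_sq[of a w] by (simp add: power_mult_distrib)
  then show ?thesis by (rule power2_le_imp_le) simp
qed

lemma norm_DD_ge_cos: "cmod (DD a w) \<ge> 2 * \<bar>cos (a * Im w)\<bar>"
proof -
  have "(2 * \<bar>cos (a * Im w)\<bar>)^2 \<le> (cmod (DD a w))^2"
    using norm_DD_sq[of a w] by (simp add: power_mult_distrib)
  then show ?thesis by (rule power2_le_imp_le) simp
qed

lemma DD_eq_0_iff:
  assumes "a > 0"
  shows "DD a w = 0 \<longleftrightarrow> Re w = 0 \<and> cos (a * Im w) = 0"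
proof -
  have "DD a w = 0 \<longleftrightarrow> (cmod (DD a w))^2 = 0" by simp
  also have "\<dots> \<longleftrightarrow> (sinh (a * Re w))^2 + (cos (a * Im w))^2 = 0"
    by (simp only: norm_DD_sq mult_eq_0_iff) simp
  also have "\<dots> \<longleftrightarrow> sinh (a * Re w) = 0 \<and> cos (a * Im w) = 0"
    by (simp add: sum_power2_eq_zero_iff)
  also have "\<dots> \<longleftrightarrow> Re w = 0 \<and> cos (a * Im w) = 0"
    using assms by simp
  finally show ?thesis .
qed

lemma poleset_iff:
  assumes "a > 0"
  shows "z \<in> poleset a \<longleftrightarrow> Re z \<in> \<int> \<and> cos (a * Im z) = 0"
proof
  assume "z \<in> poleset a"
  then obtain m n :: int where z: "z = of_int m + \<i> * complex_of_real (pi / a) * (1/2 + of_int n)"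
    unfolding poleset_def by blast
  have re: "Re z = of_int m" and im: "Im z = pi / a * (1/2 + of_int n)" by (simp_all add: z)
  have "a * Im z = of_int (2 * n + 1) * (pi / 2)" using assms by (simp add: im field_simps)
  then have "cos (a * Im z) = 0" by (subst cos_zero_iff_int) (intro exI[of _ "2*n+1"], simp)
  then show "Re z \<in> \<int> \<and> cos (a * Im z) = 0" by (simp add: re)
next
  assume h: "Re z \<in> \<int> \<and> cos (a * Im z) = 0"
  then obtain m where m: "Re z = of_int m" by (auto elim: Ints_cases)
  from h obtain i where i: "odd i" "a * Im z = of_int i * (pi / 2)" by (auto simp: cos_zero_iff_int)
  from i(1) obtain n where n: "i = 2 * n + 1" by (auto elim: oddE)
  have im: "Im z = pi / a * (1/2 + of_int n)" using i(2) assms by (simp add: n field_simps)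
  have "z = of_int m + \<i> * complex_of_real (pi / a) * (1/2 + of_int n)"
    by (simp add: complex_eq_iff m im)
  then show "z \<in> poleset a" unfolding poleset_def by blast
qed

lemma DD_shift_eq_0_iff:
  assumes "a > 0"
  shows "DD a (z - of_int k) = 0 \<longleftrightarrow> Re z = of_int k \<and> cos (a * Im z) = 0"
  using DD_eq_0_iff[OF assms, of "z - of_int k"] by simp

lemma DD_shift_nz:
  assumes "a > 0" "z \<notin> poleset a"
  shows "DD a (z - of_int k) \<noteq> 0"
  using assms by (auto simp: DD_shift_eq_0_iff poleset_iff)

lemma poleset_closed:
  assumes "a > 0"
  shows "closed (poleset a)"
proof -
  have "poleset a = {z. sin (pi * Re z) = 0} \<inter> {z. cos (a * Im z) = 0}"
  proof (intro set_eqI)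
    fix z
    have "Re z \<in> \<int> \<longleftrightarrow> sin (pi * Re z) = 0"
    proof
      assume "Re z \<in> \<int>" then obtain i where "Re z = of_int i" by (auto elim: Ints_cases)
      then show "sin (pi * Re z) = 0" by simp
    next
      assume "sin (pi * Re z) = 0"
      then obtain i :: int where "pi * Re z = of_int i * pi" by (auto simp: sin_zero_iff_int2)
      then have "Re z = of_int i" by simp
      then show "Re z \<in> \<int>" by simp
    qed
    then show "z \<in> poleset a \<longleftrightarrow> z \<in> {z. sin (pi * Re z) = 0} \<inter> {z. cos (a * Im z) = 0}"
      using poleset_iff[OF assms] by auto
  qed
  also have "closed \<dots>"
    by (intro closed_Int closed_Collect_eq continuous_intros)
  finally show ?thesis .
qed

lemma poleset_isolated:
  assumes "a > 0" "z0 \<in> poleset a" "w \<in> poleset a" "cmod (w - z0) < min (1/4) (pi / (2 * a))"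
  shows "w = z0"
proof -
  obtain m n :: int where z: "z0 = of_int m + \<i> * complex_of_real (pi / a) * (1/2 + of_int n)"
    using assms(2) unfolding poleset_def by blast
  obtain m' n' :: int where w: "w = of_int m' + \<i> * complex_of_real (pi / a) * (1/2 + of_int n')"
    using assms(3) unfolding poleset_def by blast
  have "\<bar>Re (w - z0)\<bar> < 1/4" using abs_Re_le_cmod[of "w - z0"] assms(4) by linarith
  then have "\<bar>of_int (m' - m) :: real\<bar> < 1" by (simp add: z w)
  then have mm: "m' = m" by linarith
  have "\<bar>Im (w - z0)\<bar> < pi / (2 * a)" using abs_Im_le_cmod[of "w - z0"] assms(4) by linarith
  moreover have "Im (w - z0) = pi / a * of_int (n' - n)" by (simp add: z w algebra_simps)
  ultimately have "pi / a * \<bar>of_int (n' - n)\<bar> < pi / (2 * a)"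
    using assms(1) by (simp add: abs_mult)
  then have "\<bar>of_int (n' - n) :: real\<bar> < 1"
    using assms(1) pi_gt_zero by (simp add: field_simps)
  then have "n' = n" by linarith
  then show ?thesis using mm z w by simp
qed

definition KK :: "real \<Rightarrow> real" where "KK a = 2 / (1 - exp (-a/2))"

lemma KK_pos: "a > 0 \<Longrightarrow> KK a > 0"
  by (simp add: KK_def)

lemma sinh_abs_ge: "2 * \<bar>sinh (x::real)\<bar> = exp \<bar>x\<bar> - exp (- \<bar>x\<bar>)"
proof (cases "x \<ge> 0")
  case True
  then have "exp (-x) \<le> exp x" by simp
  then show ?thesis using True by (simp add: sinh_def)
next
  case False
  then have "exp x \<le> exp (-x)" by simp
  then show ?thesis using False by (simp add: sinh_def)
qed

lemma psi_exp_bound: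
  assumes "a > 0" "1/4 \<le> \<bar>Re w\<bar>"
  shows "cmod (psi a w) \<le> KK a * exp (- a * \<bar>Re w\<bar>)"
proof -
  define t where "t = a * \<bar>Re w\<bar>"
  have t: "t \<ge> a / 4" using assms by (simp add: t_def)
  have "exp (-t) = exp t * exp (-2*t)" by (simp add: exp_add[symmetric])
  also have "\<dots> \<le> exp t * exp (-a/2)" using t by (intro mult_left_mono) auto
  finally have e: "exp (-t) \<le> exp t * exp (-a/2)" .
  have q: "0 < 1 - exp (-a/2)" using assms by simp
  have "cmod (DD a w) \<ge> exp t - exp (-t)"
    using norm_DD_ge_sinh[of a w] sinh_abs_ge[of "a * Re w"] assms
    by (simp add: t_def abs_mult)
  then have D: "cmod (DD a w) \<ge> exp t * (1 - exp (-a/2))" using e by (simp add: algebra_simps)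
  have Dpos: "exp t * (1 - exp (-a/2)) > 0" using q by simp
  have "cmod (psi a w) = 2 / cmod (DD a w)" by (simp add: psi_DD norm_divide)
  also have "\<dots> \<le> 2 / (exp t * (1 - exp (-a/2)))"
  proof (rule divide_left_mono[OF D])
    have Dp: "0 < cmod (DD a w)" using D Dpos by linarith
    show "0 < cmod (DD a w) * (exp t * (1 - exp (- a / 2)))" by (rule mult_pos_pos[OF Dp Dpos])
  qed simp
  also have "\<dots> = KK a * exp (-t)" by (simp add: KK_def exp_minus field_simps)
  finally show ?thesis by (simp add: t_def)
qed

lemma psi_lower:
  assumes "a > 0" "\<bar>Re w\<bar> \<le> 1/2" "DD a w \<noteq> 0"
  shows "cmod (psi a w) \<ge> exp (- a / 2)"
proof -
  have "cmod (DD a w) \<le> cmod (exp (complex_of_real a * w)) + cmod (exp (- (complex_of_real a * w)))"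
    unfolding DD_def by (rule norm_triangle_ineq)
  also have "\<dots> = exp (a * Re w) + exp (- (a * Re w))" by (simp add: norm_exp_eq_Re)
  also have "\<dots> \<le> exp (a/2) + exp (a/2)"
  proof -
    have "a * \<bar>Re w\<bar> \<le> a * (1/2)" using assms by (intro mult_left_mono) auto
    then have "\<bar>a * Re w\<bar> \<le> a/2" using assms by (simp add: abs_mult)
    then show ?thesis by (intro add_mono) (auto simp: abs_le_iff)
  qed
  finally have D: "cmod (DD a w) \<le> 2 * exp (a/2)" by simp
  have "exp (- a / 2) = 2 / (2 * exp (a/2))" by (simp add: exp_minus field_simps)
  also have "\<dots> \<le> 2 / cmod (DD a w)" using D assms(3) by (intro divide_left_mono) auto
  also have "\<dots> = cmod (psi a w)" by (simp add: psi_DD norm_divide)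
  finally show ?thesis .
qed

lemma psi_le_Re:
  assumes "a > 0" "Re w \<noteq> 0"
  shows "cmod (psi a w) \<le> 1 / \<bar>a * Re w\<bar>"
proof -
  have "\<bar>a * Re w\<bar> \<le> \<bar>sinh (a * Re w)\<bar>"
    using real_le_abs_sinh[of "a * Re w"] by (simp add: sinh_def exp_minus)
  then have D: "2 * \<bar>a * Re w\<bar> \<le> cmod (DD a w)" using norm_DD_ge_sinh[of a w] by linarith
  have pos: "0 < 2 * \<bar>a * Re w\<bar>" using assms by simp
  have Dp: "0 < cmod (DD a w)" using D pos by linarith
  have "cmod (psi a w) = 2 / cmod (DD a w)" by (simp add: psi_DD norm_divide)
  also have "\<dots> \<le> 2 / (2 * \<bar>a * Re w\<bar>)" using D pos Dp by (intro divide_left_mono mult_pos_pos) auto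
  finally show ?thesis by simp
qed

lemma psi_le_cos:
  assumes "cos (a * Im w) \<noteq> 0"
  shows "cmod (psi a w) \<le> 1 / \<bar>cos (a * Im w)\<bar>"
proof -
  have D: "2 * \<bar>cos (a * Im w)\<bar> \<le> cmod (DD a w)" by (rule norm_DD_ge_cos)
  have pos: "0 < 2 * \<bar>cos (a * Im w)\<bar>" using assms by simp
  have Dp: "0 < cmod (DD a w)" using D pos by linarith
  have "cmod (psi a w) = 2 / cmod (DD a w)" by (simp add: psi_DD norm_divide)
  also have "\<dots> \<le> 2 / (2 * \<bar>cos (a * Im w)\<bar>)" using D pos Dp by (intro divide_left_mono mult_pos_pos) auto
  finally show ?thesis by simp
qed

lemma jordan:
  assumes "0 \<le> x" "x \<le> pi / 2"
  shows "2 / pi * x \<le> sin x"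
proof -
  have conc: "concave_on {0..pi/2} sin"
    by (rule f''_le0_imp_concave[where f' = cos and f'' = "\<lambda>x. - sin x"])
       (auto intro!: derivative_eq_intros sin_ge_zero)
  define t where "t = x / (pi / 2)"
  have t: "0 \<le> t" "t \<le> 1" using assms by (auto simp: t_def field_simps)
  have "(1 - t) * sin 0 + t * sin (pi/2) \<le> sin ((1 - t) *\<^sub>R 0 + t *\<^sub>R (pi/2))"
    using concave_onD[OF conc t(1) t(2), of 0 "pi/2"] by simp
  moreover have "(1 - t) *\<^sub>R 0 + t *\<^sub>R (pi/2) = x" by (simp add: t_def)
  ultimately have "t \<le> sin x" by simp
  then show ?thesis by (simp add: t_def) (simp add: mult.commute)
qed

lemma jordan_abs:
  assumes "\<bar>u\<bar> \<le> 1/2"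
  shows "2 * \<bar>u\<bar> \<le> \<bar>sin (pi * u)\<bar>"
proof -
  have "2 / pi * (pi * \<bar>u\<bar>) \<le> sin (pi * \<bar>u\<bar>)"
    using assms by (intro jordan) (auto simp: mult_left_mono[of _ "1/2" pi])
  moreover have "\<bar>sin (pi * u)\<bar> = sin (pi * \<bar>u\<bar>)"
  proof -
    have "pi * \<bar>u\<bar> \<le> pi * 1" using assms by (intro mult_left_mono) auto
    then have nn: "0 \<le> sin (pi * \<bar>u\<bar>)" by (intro sin_ge_zero) auto
    have "\<bar>sin (pi * u)\<bar> = \<bar>sin (pi * \<bar>u\<bar>)\<bar>" by (cases "u \<ge> 0") auto
    then show ?thesis using nn by simp
  qed
  ultimately show ?thesis by simp
qed

lemma cfrac_bounds: "-1/2 \<le> cfrac x" "cfrac x < 1/2"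
  unfolding cfrac_def using floor_correct[of "x + 1/2"] by linarith+

lemma cos_cfrac:
  shows "2 * \<bar>cfrac (a * y / pi - 1/2)\<bar> \<le> \<bar>cos (a * y)\<bar>"
proof -
  define s where "s = a * y / pi - 1/2"
  define l where "l = \<lfloor>s + 1/2\<rfloor>"
  define u where "u = cfrac s"
  have us: "u = s - of_int l" by (simp add: u_def l_def cfrac_def)
  have ay: "a * y = pi * u + pi * of_int l + pi / 2" by (simp add: us s_def field_simps)
  have "\<bar>cos (pi * of_int l)\<bar> = 1" by (rule sin_zero_abs_cos_one) simp
  then have "\<bar>cos (a * y)\<bar> = \<bar>sin (pi * u)\<bar>"
    by (simp add: ay cos_add sin_add abs_mult)
  moreover have "\<bar>u\<bar> \<le> 1/2" using cfrac_bounds[of s] by (simp add: u_def)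
  ultimately show ?thesis using jordan_abs[of u] by (simp add: u_def s_def)
qed

lemma geo_int_summable:
  fixes a :: real
  assumes "a > 0"
  shows "(\<lambda>k::int. exp (- a * \<bar>of_int k\<bar>)) summable_on UNIV"
proof -
  define g where "g = (\<lambda>k::int. exp (- a * \<bar>of_int k\<bar>))"
  have sg: "summable (\<lambda>n::nat. exp (-a) ^ n)" using summable_geometric[of "exp (-a)"] assms by simp
  have geo: "(\<lambda>n::nat. exp (-a) ^ n) summable_on UNIV"
    using summable_on_UNIV_nonneg_real_iff[of "\<lambda>n. exp (-a) ^ n"] sg by simp
  have e: "exp (- (a * real n)) = exp (-a) ^ n" for n
    by (subst exp_of_nat_mult[symmetric]) (simp add: mult.commute)
  have "(g \<circ> int) summable_on UNIV" using geo by (simp add: g_def o_def e)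
  then have 1: "g summable_on range int" by (subst summable_on_reindex) (auto simp: inj_on_def)
  have "(g \<circ> (\<lambda>n. - int n)) summable_on UNIV" using geo by (simp add: g_def o_def e)
  then have 2: "g summable_on range (\<lambda>n. - int n)" by (subst summable_on_reindex) (auto simp: inj_on_def)
  have U: "(UNIV :: int set) = range int \<union> range (\<lambda>n. - int n)"
  proof (intro set_eqI iffI)
    fix k :: int
    show "k \<in> range int \<union> range (\<lambda>n. - int n)"
    proof (cases "k \<ge> 0")
      case True then have "k = int (nat k)" by simp
      then show ?thesis by blast
    next
      case False then have "k = - int (nat (-k))" by simp
      then show ?thesis by blast
    qed
  qed auto
  show ?thesis using summable_on_union[OF 1 2] U by (simp add: g_def)
qed

definition S0 :: "real \<Rightarrow> real" where "S0 a = infsum (\<lambda>k::int. exp (- a * \<bar>of_int k\<bar>)) UNIV"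

lemma geo_shift:
  fixes a :: real
  assumes "a > 0"
  shows "(\<lambda>k::int. exp (- a * \<bar>of_int k - of_int m\<bar>)) summable_on UNIV"
    and "infsum (\<lambda>k::int. exp (- a * \<bar>of_int k - of_int m\<bar>)) UNIV = S0 a"
proof -
  have b: "bij_betw (\<lambda>k::int. k - m) UNIV UNIV"
    by (rule bij_betwI[where g = "\<lambda>k. k + m"]) auto
  show "(\<lambda>k::int. exp (- a * \<bar>of_int k - of_int m\<bar>)) summable_on UNIV"
    using summable_on_reindex_bij_betw[OF b, of "\<lambda>k::int. exp (- a * \<bar>of_int k\<bar>)"]
      geo_int_summable[OF assms] by simp
  show "infsum (\<lambda>k::int. exp (- a * \<bar>of_int k - of_int m\<bar>)) UNIV = S0 a"
    using infsum_reindex_bij_betw[OF b, of "\<lambda>k::int. exp (- a * \<bar>of_int k\<bar>)"]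
    by (simp add: S0_def)
qed

lemma S0_nonneg: "S0 a \<ge> 0"
  unfolding S0_def by (intro infsum_nonneg) auto

lemma norm_c_le:
  assumes "bdd_above (range (\<lambda>k. norm (c k)))"
  shows "norm (c k) \<le> supnorm c"
  unfolding supnorm_def using assms by (intro cSUP_upper) auto

lemma supnorm_nonneg:
  assumes "bdd_above (range (\<lambda>k. norm (c k)))"
  shows "supnorm c \<ge> 0"
  using norm_c_le[OF assms, of 0] norm_ge_zero[of "c 0"] by linarith

definition TT :: "real \<Rightarrow> (int \<Rightarrow> complex) \<Rightarrow> int \<Rightarrow> complex \<Rightarrow> complex" where
  "TT a c k z = c k * psi a (z - of_int k)"

definition VV :: "int \<Rightarrow> complex set" where
  "VV m = {z. \<bar>Re z - of_int m\<bar> < 3/4}"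

lemma VV_open: "open (VV m)"
  unfolding VV_def by (intro open_Collect_less continuous_intros)

definition rnd :: "complex \<Rightarrow> int" where "rnd z = \<lfloor>Re z + 1/2\<rfloor>"

lemma rnd_bound: "\<bar>Re z - of_int (rnd z)\<bar> \<le> 1/2"
  unfolding rnd_def using floor_correct[of "Re z + 1/2"] by linarith

lemma in_VV_rnd: "z \<in> VV (rnd z)"
  using rnd_bound[of z] by (simp add: VV_def)

definition BB :: "real \<Rightarrow> (int \<Rightarrow> complex) \<Rightarrow> real" where
  "BB a c = supnorm c * (KK a * exp (3 * a / 4))"

lemma BB_nonneg: "a > 0 \<Longrightarrow> bdd_above (range (\<lambda>k. norm (c k))) \<Longrightarrow> BB a c \<ge> 0"
  unfolding BB_def using supnorm_nonneg[of c] KK_pos[of a] by simp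

lemma TT_bound:
  assumes "a > 0" "bdd_above (range (\<lambda>k. norm (c k)))" "z \<in> VV m" "k \<noteq> m"
  shows "norm (TT a c k z) \<le> BB a c * exp (- a * \<bar>of_int k - of_int m\<bar>)"
proof -
  have zm: "\<bar>Re z - of_int m\<bar> < 3/4" using assms(3) by (simp add: VV_def)
  have km: "\<bar>of_int k - of_int m :: real\<bar> \<ge> 1" using assms(4) by linarith
  have r: "\<bar>Re (z - of_int k)\<bar> \<ge> \<bar>of_int k - of_int m\<bar> - 3/4" 
  proof -
    have "\<bar>(Re z - of_int m) - (Re z - of_int k)\<bar> \<le> \<bar>Re z - of_int m\<bar> + \<bar>Re z - of_int k\<bar>"
      by (rule abs_triangle_ineq4)
    then show ?thesis using zm by simp
  qed
  have "cmod (psi a (z - of_int k)) \<le> KK a * exp (- a * \<bar>Re (z - of_int k)\<bar>)"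
    using r km assms(1) by (intro psi_exp_bound) auto
  also have "\<dots> \<le> KK a * exp (- a * (\<bar>of_int k - of_int m\<bar> - 3/4))"
    using r assms(1) KK_pos[OF assms(1)] by (intro mult_left_mono) auto
  also have "\<dots> = KK a * exp (3 * a / 4) * exp (- a * \<bar>of_int k - of_int m\<bar>)"
    by (simp add: exp_add[symmetric] algebra_simps)
  finally have p: "cmod (psi a (z - of_int k)) \<le> KK a * exp (3 * a / 4) * exp (- a * \<bar>of_int k - of_int m\<bar>)" .
  have "norm (TT a c k z) = norm (c k) * cmod (psi a (z - of_int k))" by (simp add: TT_def norm_mult)
  also have "\<dots> \<le> supnorm c * (KK a * exp (3 * a / 4) * exp (- a * \<bar>of_int k - of_int m\<bar>))"
    using norm_c_le[OF assms(2)] p by (intro mult_mono) (auto simp: supnorm_nonneg[OF assms(2)])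
  finally show ?thesis by (simp add: BB_def mult.assoc)
qed

lemma TT_hol_gen:
  assumes "\<And>z. z \<in> S \<Longrightarrow> DD a (z - of_int k) \<noteq> 0"
  shows "TT a c k holomorphic_on S"
proof -
  have "(\<lambda>z. c k * (2 / DD a (z - of_int k))) holomorphic_on S"
    using assms unfolding DD_def by (intro holomorphic_intros) auto
  then show ?thesis by (rule holomorphic_transform) (simp add: TT_def psi_DD)
qed

lemma TT_hol_VV:
  assumes "a > 0" "k \<noteq> m"
  shows "TT a c k holomorphic_on VV m"
proof (rule TT_hol_gen)
  fix z assume "z \<in> VV m"
  then have "\<bar>Re z - of_int m\<bar> < 3/4" by (simp add: VV_def)
  then have "Re z \<noteq> of_int k"
  proof (intro notI)
    assume "\<bar>Re z - of_int m\<bar> < 3/4" "Re z = of_int k"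
    then have "\<bar>of_int (k - m) :: real\<bar> < 1" by simp
    then show False using assms(2) by linarith
  qed
  then show "DD a (z - of_int k) \<noteq> 0" using DD_shift_eq_0_iff[OF assms(1)] by simp
qed

lemma bound_summable:
  assumes "a > 0"
  shows "(\<lambda>k. BB a c * exp (- a * \<bar>of_int k - of_int m\<bar>)) summable_on (UNIV - {m})"
  by (rule summable_on_subset_banach[OF summable_on_cmult_right[OF geo_shift(1)[OF assms]]]) auto

lemma bound_infsum_le:
  assumes "a > 0" "bdd_above (range (\<lambda>k. norm (c k)))"
  shows "infsum (\<lambda>k. BB a c * exp (- a * \<bar>of_int k - of_int m\<bar>)) (UNIV - {m}) \<le> BB a c * S0 a"
proof -
  have "infsum (\<lambda>k. BB a c * exp (- a * \<bar>of_int k - of_int m\<bar>)) (UNIV - {m})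
      \<le> infsum (\<lambda>k. BB a c * exp (- a * \<bar>of_int k - of_int m\<bar>)) UNIV"
    using BB_nonneg[OF assms]
    by (intro infsum_mono_neutral bound_summable[OF assms(1)]
        summable_on_cmult_right[OF geo_shift(1)[OF assms(1)]]) auto
  also have "\<dots> = BB a c * S0 a"
    using geo_shift[OF assms(1), of m] by (subst infsum_cmult_right) auto
  finally show ?thesis .
qed

lemma TT_summable_VV:
  assumes "a > 0" "bdd_above (range (\<lambda>k. norm (c k)))" "z \<in> VV m"
  shows "(\<lambda>k. TT a c k z) summable_on (UNIV - {m})"
proof -
  have "(\<lambda>k. norm (TT a c k z)) summable_on (UNIV - {m})"
    by (rule summable_on_comparison_test[OF bound_summable[OF assms(1)]])
       (use TT_bound[OF assms] in auto)
  then show ?thesis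
    by (simp add: summable_on_iff_abs_summable_on_complex)
qed

lemma TT_summable:
  assumes "a > 0" "bdd_above (range (\<lambda>k. norm (c k)))"
  shows "(\<lambda>k. TT a c k z) summable_on UNIV"
proof -
  have "(\<lambda>k. TT a c k z) summable_on insert (rnd z) (UNIV - {rnd z})"
    using TT_summable_VV[OF assms in_VV_rnd] by (subst summable_on_insert_iff) auto
  then show ?thesis by (simp add: insert_absorb)
qed

definition GG :: "real \<Rightarrow> (int \<Rightarrow> complex) \<Rightarrow> int \<Rightarrow> complex \<Rightarrow> complex" where
  "GG a c m z = infsum (\<lambda>k. TT a c k z) (UNIV - {m})"

lemma GG_split:
  assumes "a > 0" "bdd_above (range (\<lambda>k. norm (c k)))" "z \<in> VV m"
  shows "infsum (\<lambda>k. TT a c k z) UNIV = TT a c m z + GG a c m z"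
proof -
  have "infsum (\<lambda>k. TT a c k z) (insert m (UNIV - {m})) = TT a c m z + GG a c m z"
    unfolding GG_def by (rule infsum_insert[OF TT_summable_VV[OF assms]]) simp
  then show ?thesis by (simp add: insert_absorb)
qed

lemma GG_analytic:
  assumes "a > 0" "bdd_above (range (\<lambda>k. norm (c k)))"
  shows "GG a c m analytic_on VV m"
  unfolding analytic_on_def
proof
  fix z assume z: "z \<in> VV m"
  obtain r where r: "r > 0" "cball z r \<subseteq> VV m"
    using VV_open z open_contains_cball by blast
  have ul: "uniform_limit (cball z r) (\<lambda>X y. \<Sum>k\<in>X. TT a c k y) (\<lambda>y. \<Sum>\<^sub>\<infinity>k\<in>UNIV - {m}. TT a c k y)
      (finite_subsets_at_top (UNIV - {m}))"
    by (rule Weierstrass_m_test_general[OF _ bound_summable[OF assms(1), of c m]])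
       (use TT_bound[OF assms] r in auto)
  have ev: "eventually (\<lambda>X. continuous_on (cball z r) (\<lambda>y. \<Sum>k\<in>X. TT a c k y) \<and>
               (\<lambda>y. \<Sum>k\<in>X. TT a c k y) holomorphic_on ball z r) (finite_subsets_at_top (UNIV - {m}))"
  proof (rule eventually_finite_subsets_at_top_weakI)
    fix X assume X: "finite X" "X \<subseteq> UNIV - {m}"
    have h: "(\<lambda>y. \<Sum>k\<in>X. TT a c k y) holomorphic_on VV m"
      using X TT_hol_VV[OF assms(1)] by (intro holomorphic_on_sum) auto
    show "continuous_on (cball z r) (\<lambda>y. \<Sum>k\<in>X. TT a c k y) \<and>
          (\<lambda>y. \<Sum>k\<in>X. TT a c k y) holomorphic_on ball z r"
      using r ball_subset_cball h
      by (meson holomorphic_on_imp_continuous_on holomorphic_on_subset order_trans)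
  qed
  have "(\<lambda>y. \<Sum>\<^sub>\<infinity>k\<in>UNIV - {m}. TT a c k y) holomorphic_on ball z r"
    by (rule holomorphic_uniform_limit[OF ev ul]) simp_all
  then have "GG a c m holomorphic_on ball z r" by (simp add: GG_def[abs_def])
  then show "\<exists>e. 0 < e \<and> GG a c m holomorphic_on ball z e" using r by blast
qed

definition FF :: "real \<Rightarrow> (int \<Rightarrow> complex) \<Rightarrow> complex \<Rightarrow> complex" where
  "FF a c z = (if z \<in> poleset a then 0 else infsum (\<lambda>k. TT a c k z) UNIV)"

lemma FF_hol_W:
  assumes "a > 0" "bdd_above (range (\<lambda>k. norm (c k)))"
  shows "FF a c holomorphic_on (VV m - poleset a)"
proof -
  have "(\<lambda>z. TT a c m z + GG a c m z) holomorphic_on (VV m - poleset a)"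
  proof (intro holomorphic_intros)
    show "TT a c m holomorphic_on VV m - poleset a"
      by (rule TT_hol_gen) (use DD_shift_nz[OF assms(1)] in auto)
    show "GG a c m holomorphic_on VV m - poleset a"
      using analytic_imp_holomorphic[OF GG_analytic[OF assms]] by (rule holomorphic_on_subset) auto
  qed
  then show ?thesis
    by (rule holomorphic_transform) (auto simp: FF_def GG_split[OF assms])
qed

lemma W_open: "a > 0 \<Longrightarrow> open (VV m - poleset a)"
  using VV_open poleset_closed by (intro open_Diff) auto

lemma FF_analytic:
  assumes "a > 0" "bdd_above (range (\<lambda>k. norm (c k)))"
  shows "FF a c analytic_on (UNIV - poleset a)"
proof (subst analytic_on_analytic_at, intro ballI)
  fix z assume z: "z \<in> UNIV - poleset a"
  have "FF a c analytic_on (VV (rnd z) - poleset a)"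
    using FF_hol_W[OF assms] W_open[OF assms(1)] by (simp add: analytic_on_open)
  then show "FF a c analytic_on {z}"
    by (rule analytic_on_subset) (use z in_VV_rnd in auto)
qed

lemma pole_local:
  assumes "a > 0" "bdd_above (range (\<lambda>k. norm (c k)))" "z0 \<in> poleset a"
  obtains r m g where "r > 0" "ball z0 r \<subseteq> VV m" "g holomorphic_on ball z0 r"
    "\<And>w. w \<in> ball z0 r \<Longrightarrow> w \<noteq> z0 \<Longrightarrow> w \<notin> poleset a"
    "\<And>w. w \<in> ball z0 r \<Longrightarrow> w \<noteq> z0 \<Longrightarrow> FF a c w = g w * (w - z0) powi (-1)"
    "\<And>w. w \<in> ball z0 r \<Longrightarrow> w \<noteq> z0 \<Longrightarrow> FF a c w = TT a c m w + GG a c m w"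
    "g z0 = 0 \<longleftrightarrow> c m = 0"
proof -
  from assms(3) have "Re z0 \<in> \<int>" and cz: "cos (a * Im z0) = 0" using poleset_iff[OF assms(1)] by auto
  then obtain m where m: "Re z0 = of_int m" by (auto elim: Ints_cases)
  define r where "r = min (1/4) (pi / (2 * a))"
  have r: "r > 0" using assms(1) by (simp add: r_def)
  have sub: "ball z0 r \<subseteq> VV m"
  proof
    fix w assume "w \<in> ball z0 r"
    then have "cmod (w - z0) < 1/4" by (simp add: r_def dist_norm norm_minus_commute)
    moreover have "\<bar>Re (w - z0)\<bar> \<le> cmod (w - z0)" by (rule abs_Re_le_cmod)
    ultimately show "w \<in> VV m" using m by (simp add: VV_def)
  qed
  have notp: "w \<notin> poleset a" if "w \<in> ball z0 r" "w \<noteq> z0" for w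
  proof
    assume "w \<in> poleset a"
    moreover have "cmod (w - z0) < min (1/4) (pi / (2 * a))"
      using that by (simp add: r_def dist_norm norm_minus_commute)
    ultimately have "w = z0" using poleset_isolated[OF assms(1,3)] by blast
    then show False using that by simp
  qed
  define H where "H = (\<lambda>w. DD a (w - of_int m))"
  have Hhol: "H holomorphic_on UNIV" unfolding H_def DD_def by (intro holomorphic_intros)
  have H0: "H z0 = 0" using cz m by (simp add: H_def DD_shift_eq_0_iff[OF assms(1)])
  define h where "h = (\<lambda>w. if w = z0 then deriv H z0 else (H w - H z0) / (w - z0))"
  have hhol: "h holomorphic_on UNIV" unfolding h_def by (rule pole_lemma[OF Hhol]) simp
  define \<zeta> where "\<zeta> = z0 - of_int m"
  have dH: "(H has_field_derivative (of_real a * exp (of_real a * \<zeta>) - of_real a * exp (- (of_real a * \<zeta>)))) (at z0)"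
    unfolding H_def DD_def \<zeta>_def by (auto intro!: derivative_eq_intros)
  have D0: "exp (of_real a * \<zeta>) + exp (- (of_real a * \<zeta>)) = 0" using H0 by (simp add: H_def DD_def \<zeta>_def)
  have "deriv H z0 = of_real a * exp (of_real a * \<zeta>) - of_real a * exp (- (of_real a * \<zeta>))"
    by (rule DERIV_imp_deriv[OF dH])
  also have "\<dots> = 2 * of_real a * exp (of_real a * \<zeta>)"
    using D0 by (simp add: algebra_simps eq_neg_iff_add_eq_0[symmetric])
  finally have dnz: "deriv H z0 \<noteq> 0" using assms(1) by simp
  have hnz: "h w \<noteq> 0" if "w \<in> ball z0 r" for w
  proof (cases "w = z0")
    case True then show ?thesis using dnz by (simp add: h_def)
  next
    case False
    have "H w \<noteq> 0" unfolding H_def by (rule DD_shift_nz[OF assms(1) notp[OF that False]])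
    then show ?thesis using False H0 by (simp add: h_def)
  qed
  have hw: "H w = h w * (w - z0)" if "w \<noteq> z0" for w using that H0 by (simp add: h_def)
  define g where "g = (\<lambda>w. 2 * c m / h w + (w - z0) * GG a c m w)"
  have GGhol: "GG a c m holomorphic_on ball z0 r"
    using analytic_imp_holomorphic[OF GG_analytic[OF assms(1,2)]] sub by (rule holomorphic_on_subset)
  have ghol: "g holomorphic_on ball z0 r" unfolding g_def
    using hnz GGhol holomorphic_on_subset[OF hhol] by (intro holomorphic_intros) auto
  have FT: "FF a c w = TT a c m w + GG a c m w" if "w \<in> ball z0 r" "w \<noteq> z0" for w
    using notp[OF that] GG_split[OF assms(1,2)] sub that by (auto simp: FF_def)
  have Fg: "FF a c w = g w * (w - z0) powi (-1)" if "w \<in> ball z0 r" "w \<noteq> z0" for w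
  proof -
    have hz: "h w \<noteq> 0" by (rule hnz[OF that(1)])
    have wz: "w - z0 \<noteq> 0" using that by simp
    have "FF a c w = c m * (2 / (h w * (w - z0))) + GG a c m w"
      using FT[OF that] hw[OF that(2)] by (simp add: TT_def psi_DD H_def)
    also have "\<dots> = g w * (w - z0) powi (-1)"
      using hz wz by (simp add: g_def power_int_minus field_simps)
    finally show ?thesis .
  qed
  have "g z0 = 2 * c m / h z0" by (simp add: g_def)
  then have gz: "g z0 = 0 \<longleftrightarrow> c m = 0" using hnz[of z0] r by simp
  show ?thesis by (rule that[OF r sub ghol notp Fg FT gz])
qed



lemma ev_at_ball:
  assumes "r > 0" "\<And>w. w \<in> ball z r \<Longrightarrow> w \<noteq> z \<Longrightarrow> P w"
  shows "eventually P (at z)"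
  unfolding eventually_at using assms by (intro exI[of _ r]) (auto simp: dist_commute)

lemma FF_poles:
  assumes "a > 0" "bdd_above (range (\<lambda>k. norm (c k)))" "is_pole (FF a c) z"
  shows "z \<in> poleset a \<and> zorder (FF a c) z = -1"
proof (cases "z \<in> poleset a")
  case False
  have "\<not> is_pole (FF a c) z"
    by (rule not_is_pole_holomorphic[OF W_open[OF assms(1)] _ FF_hol_W[OF assms(1,2)]])
       (use False in_VV_rnd in auto)
  then show ?thesis using assms(3) by simp
next
  case True
  obtain r m g where r: "r > 0" "ball z r \<subseteq> VV m" "g holomorphic_on ball z r"
    "\<And>w. w \<in> ball z r \<Longrightarrow> w \<noteq> z \<Longrightarrow> w \<notin> poleset a"
    "\<And>w. w \<in> ball z r \<Longrightarrow> w \<noteq> z \<Longrightarrow> FF a c w = g w * (w - z) powi (-1)"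
    "\<And>w. w \<in> ball z r \<Longrightarrow> w \<noteq> z \<Longrightarrow> FF a c w = TT a c m w + GG a c m w"
    "g z = 0 \<longleftrightarrow> c m = 0"
    by (rule pole_local[OF assms(1,2) True], rule that)
  show ?thesis
  proof (cases "c m = 0")
    case True
    have "eventually (\<lambda>w. FF a c w = GG a c m w) (at z)"
      by (rule ev_at_ball[OF r(1)]) (use r(6) True in \<open>auto simp: TT_def\<close>)
    then have "is_pole (GG a c m) z" using assms(3) is_pole_cong by blast
    moreover have "\<not> is_pole (GG a c m) z"
      by (rule not_is_pole_holomorphic[OF VV_open _ analytic_imp_holomorphic[OF GG_analytic[OF assms(1,2)]]])
         (use r(1,2) in auto)
    ultimately show ?thesis by simp
  next
    case False
    have "zorder (FF a c) z = -1"
    proof (rule zorder_eqI[OF open_ball _ r(3)])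
      show "z \<in> ball z r" using r(1) by simp
      show "g z \<noteq> 0" using r(7) False by simp
      fix w assume "w \<in> ball z r" "w \<noteq> z"
      then show "FF a c w = g w * (w - z) powi (-1)" by (rule r(5))
    qed
    then show ?thesis using \<open>z \<in> poleset a\<close> by simp
  qed
qed

lemma FF_meromorphic:
  assumes "a > 0" "bdd_above (range (\<lambda>k. norm (c k)))"
  shows "FF a c meromorphic_on UNIV"
proof (subst meromorphic_on_meromorphic_at, intro ballI)
  fix z :: complex
  show "FF a c meromorphic_on {z}"
  proof (cases "z \<in> poleset a")
    case False
    then show ?thesis
      by (intro analytic_on_imp_meromorphic_on analytic_on_subset[OF FF_analytic[OF assms]]) auto
  next
    case True
    obtain r m g where r: "r > 0" "ball z r \<subseteq> VV m" "g holomorphic_on ball z r"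
      "\<And>w. w \<in> ball z r \<Longrightarrow> w \<noteq> z \<Longrightarrow> w \<notin> poleset a"
      "\<And>w. w \<in> ball z r \<Longrightarrow> w \<noteq> z \<Longrightarrow> FF a c w = g w * (w - z) powi (-1)"
      "\<And>w. w \<in> ball z r \<Longrightarrow> w \<noteq> z \<Longrightarrow> FF a c w = TT a c m w + GG a c m w"
      "g z = 0 \<longleftrightarrow> c m = 0"
      by (rule pole_local[OF assms True], rule that)
    have "g analytic_on ball z r" using r(3) by (simp add: analytic_on_open)
    then have ga: "g analytic_on {z}" by (rule analytic_on_subset) (use r(1) in simp)
    have "(\<lambda>w. g w * (w - z) powi (-1)) meromorphic_on {z}"
      by (rule meromorphic_on_mult[OF analytic_on_imp_meromorphic_on[OF ga]
            meromorphic_on_powi[OF meromorphic_on_diff[OF meromorphic_on_id meromorphic_on_const]]])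
    moreover have "FF a c meromorphic_on {z} \<longleftrightarrow> (\<lambda>w. g w * (w - z) powi (-1)) meromorphic_on {z}"
    proof -
      have ev: "eventually (\<lambda>w. FF a c w = g w * (w - z) powi (-1)) (at z)"
        by (rule ev_at_ball[OF r(1)]) (rule r(5))
      show ?thesis by (rule meromorphic_on_cong) (use ev in auto)
    qed
    ultimately show ?thesis by simp
  qed
qed

definition CC :: "real \<Rightarrow> real" where "CC a = 1 + KK a * exp (3 * a / 4) * S0 a * exp (a / 2)"

lemma CC_pos: "a > 0 \<Longrightarrow> CC a > 0"
  unfolding CC_def using KK_pos[of a] S0_nonneg[of a]
  by (intro add_pos_nonneg) auto

lemma FF_bound:
  assumes "a > 0" "bdd_above (range (\<lambda>k. norm (c k)))" "Complex x y \<notin> poleset a"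
  shows "norm (FF a c (Complex x y)) \<le> CC a * supnorm c * norm (psi a (Complex (cfrac x) y))"
proof -
  define z where "z = Complex x y"
  define m where "m = rnd z"
  have zm: "z - of_int m = Complex (cfrac x) y"
    by (simp add: z_def m_def rnd_def cfrac_def complex_eq_iff)
  have zV: "z \<in> VV m" unfolding m_def by (rule in_VV_rnd)
  have np: "z \<notin> poleset a" using assms(3) by (simp add: z_def)
  define p where "p = norm (psi a (Complex (cfrac x) y))"
  have s0: "supnorm c \<ge> 0" by (rule supnorm_nonneg[OF assms(2)])
  have p_low: "p \<ge> exp (- a / 2)"
    unfolding p_def zm[symmetric]
    by (rule psi_lower[OF assms(1)]) (use cfrac_bounds[of x] zm DD_shift_nz[OF assms(1) np, of m] in auto)
  have "FF a c z = TT a c m z + GG a c m z" using np GG_split[OF assms(1,2) zV] by (simp add: FF_def)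
  then have "norm (FF a c z) \<le> norm (TT a c m z) + norm (GG a c m z)" by (simp add: norm_triangle_ineq)
  also have "norm (TT a c m z) \<le> supnorm c * p"
    unfolding TT_def p_def zm[symmetric] norm_mult
    by (intro mult_right_mono norm_c_le[OF assms(2)]) auto
  also have "norm (GG a c m z) \<le> BB a c * S0 a"
  proof -
    have "norm (GG a c m z) \<le> infsum (\<lambda>k. BB a c * exp (- a * \<bar>of_int k - of_int m\<bar>)) (UNIV - {m})"
      unfolding GG_def
      by (rule norm_infsum_le[OF has_sum_infsum[OF TT_summable_VV[OF assms(1,2) zV]]
               has_sum_infsum[OF bound_summable[OF assms(1)]]])
         (use TT_bound[OF assms(1,2) zV] in auto)
    also have "\<dots> \<le> BB a c * S0 a" by (rule bound_infsum_le[OF assms(1,2)])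
    finally show ?thesis .
  qed
  also have "BB a c * S0 a \<le> BB a c * S0 a * (exp (a / 2) * p)"
  proof -
    have "exp (a/2) * exp (- a / 2) = 1" by (simp add: exp_add[symmetric])
    moreover have "exp (a/2) * exp (- a / 2) \<le> exp (a/2) * p" by (rule mult_left_mono[OF p_low]) simp
    ultimately have "1 \<le> exp (a / 2) * p" by linarith
    moreover have "BB a c * S0 a \<ge> 0" using BB_nonneg[OF assms(1,2)] S0_nonneg[of a] by simp
    ultimately have "BB a c * S0 a * 1 \<le> BB a c * S0 a * (exp (a / 2) * p)" by (intro mult_left_mono)
    then show ?thesis by simp
  qed
  also have "supnorm c * p + BB a c * S0 a * (exp (a / 2) * p) = CC a * supnorm c * p"
    by (simp add: CC_def BB_def algebra_simps)
  finally show ?thesis by (simp add: z_def p_def)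
qed

theorem lemma4p4:
  fixes a :: real
  assumes "a > 0"
  shows "\<exists>C>0. \<forall>c :: int \<Rightarrow> complex. bdd_above (range (\<lambda>k. norm (c k))) \<longrightarrow>
     (\<exists>F :: complex \<Rightarrow> complex.
        F meromorphic_on UNIV \<and>
        F analytic_on (UNIV - poleset a) \<and>
        (\<forall>x :: real. F (complex_of_real x) =
            (\<Sum>\<^sub>\<infinity>k\<in>(UNIV :: int set). c k * psi a (complex_of_real x - of_int k))) \<and>
        (\<forall>z. is_pole F z \<longrightarrow> z \<in> poleset a \<and> zorder F z = -1) \<and>
        (\<forall>x y :: real. Complex x y \<notin> poleset a \<longrightarrow>
            norm (F (Complex x y)) \<le> C * supnorm c * norm (psi a (Complex (cfrac x) y)) \<and>
            (cfrac x \<noteq> 0 \<longrightarrow>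
               C * supnorm c * norm (psi a (Complex (cfrac x) y)) \<le> C * supnorm c / \<bar>a * cfrac x\<bar>) \<and>
            (cfrac (a * y / pi - 1/2) \<noteq> 0 \<longrightarrow>
               C * supnorm c * norm (psi a (Complex (cfrac x) y))
                 \<le> C * supnorm c / \<bar>2 * cfrac (a * y / pi - 1/2)\<bar>)))"
proof (intro exI[of _ "CC a"] conjI allI impI)
  show "CC a > 0" by (rule CC_pos[OF assms])
next
  fix c :: "int \<Rightarrow> complex"
  assume bdd: "bdd_above (range (\<lambda>k. norm (c k)))"
  have Cs: "CC a * supnorm c \<ge> 0" using CC_pos[OF assms] supnorm_nonneg[OF bdd] by simp
  show "\<exists>F :: complex \<Rightarrow> complex.
        F meromorphic_on UNIV \<and>
        F analytic_on (UNIV - poleset a) \<and>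
        (\<forall>x :: real. F (complex_of_real x) =
            (\<Sum>\<^sub>\<infinity>k\<in>(UNIV :: int set). c k * psi a (complex_of_real x - of_int k))) \<and>
        (\<forall>z. is_pole F z \<longrightarrow> z \<in> poleset a \<and> zorder F z = -1) \<and>
        (\<forall>x y :: real. Complex x y \<notin> poleset a \<longrightarrow>
            norm (F (Complex x y)) \<le> CC a * supnorm c * norm (psi a (Complex (cfrac x) y)) \<and>
            (cfrac x \<noteq> 0 \<longrightarrow>
               CC a * supnorm c * norm (psi a (Complex (cfrac x) y)) \<le> CC a * supnorm c / \<bar>a * cfrac x\<bar>) \<and>
            (cfrac (a * y / pi - 1/2) \<noteq> 0 \<longrightarrow>
               CC a * supnorm c * norm (psi a (Complex (cfrac x) y))
                 \<le> CC a * supnorm c / \<bar>2 * cfrac (a * y / pi - 1/2)\<bar>))"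
  proof (intro exI[of _ "FF a c"] conjI allI impI)
    show "FF a c meromorphic_on UNIV" by (rule FF_meromorphic[OF assms bdd])
    show "FF a c analytic_on (UNIV - poleset a)" by (rule FF_analytic[OF assms bdd])
  next
    fix x :: real
    have "complex_of_real x \<notin> poleset a" using poleset_iff[OF assms] by simp
    then show "FF a c (complex_of_real x) =
            (\<Sum>\<^sub>\<infinity>k\<in>(UNIV :: int set). c k * psi a (complex_of_real x - of_int k))"
      by (simp add: FF_def TT_def)
  next
    fix z assume "is_pole (FF a c) z"
    then show "z \<in> poleset a" "zorder (FF a c) z = -1" using FF_poles[OF assms bdd] by auto
  next
    fix x y :: real assume np: "Complex x y \<notin> poleset a"
    show "norm (FF a c (Complex x y)) \<le> CC a * supnorm c * norm (psi a (Complex (cfrac x) y))"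
      by (rule FF_bound[OF assms bdd np])
  next
    fix x y :: real
    assume "cfrac x \<noteq> 0"
    then have "norm (psi a (Complex (cfrac x) y)) \<le> 1 / \<bar>a * cfrac x\<bar>"
      using psi_le_Re[OF assms, of "Complex (cfrac x) y"] by simp
    then have "CC a * supnorm c * norm (psi a (Complex (cfrac x) y)) \<le> CC a * supnorm c * (1 / \<bar>a * cfrac x\<bar>)"
      by (rule mult_left_mono[OF _ Cs])
    then show "CC a * supnorm c * norm (psi a (Complex (cfrac x) y)) \<le> CC a * supnorm c / \<bar>a * cfrac x\<bar>"
      by simp
  next
    fix x y :: real
    assume u0: "cfrac (a * y / pi - 1/2) \<noteq> 0"
    have cu: "2 * \<bar>cfrac (a * y / pi - 1/2)\<bar> \<le> \<bar>cos (a * y)\<bar>" by (rule cos_cfrac)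
    then have cnz: "cos (a * y) \<noteq> 0" using u0 by auto
    have "norm (psi a (Complex (cfrac x) y)) \<le> 1 / \<bar>cos (a * y)\<bar>"
      using psi_le_cos[of a "Complex (cfrac x) y"] cnz by simp
    also have "\<dots> \<le> 1 / \<bar>2 * cfrac (a * y / pi - 1/2)\<bar>"
      using cu u0 by (intro divide_left_mono) (auto simp: abs_mult)
    finally have "norm (psi a (Complex (cfrac x) y)) \<le> 1 / \<bar>2 * cfrac (a * y / pi - 1/2)\<bar>" .
    then have "CC a * supnorm c * norm (psi a (Complex (cfrac x) y))
        \<le> CC a * supnorm c * (1 / \<bar>2 * cfrac (a * y / pi - 1/2)\<bar>)"
      by (rule mult_left_mono[OF _ Cs])
    then show "CC a * supnorm c * norm (psi a (Complex (cfrac x) y))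
                 \<le> CC a * supnorm c / \<bar>2 * cfrac (a * y / pi - 1/2)\<bar>"
      by simp
  qed
qed

end
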